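(* Consider any finite game in extensive form with perfect recall. Let $\bar\beta^1=(\bar\beta^1_i)_{i\in N}$ be a profile of full-support belief systems and let $\beta^1=(\beta^1_i)_{i\in N}$ be a profile of full-support beliefs in the associated normal form that is consistent with $\bar\beta^1$. Then for every player $i\in N$, $\bar L_i^1(\bar\beta^1)=L_i^1(\beta^1)$.
   Context: Setting: a finite extensive-form game with finite player set $N$, possibly moves of nature $c$ (treated as a player with singleton information sets, indifferent among outcomes), possibly simultaneous moves, imperfect information, finite horizon and perfect recall. $Z$ is the set of terminal histories; $u_i:Z\to\mathbb{R}$ is player $i$'s (Bernoulli) utility; $\mathcal{I}_i$ is the set of information sets of player $i$ and $A_i(I_i)$ the actions at $I_i$. A strategy $s_i$ assigns to each $I_i\in\mathcal{I}_i$ an action in $A_i(I_i)$; $S_i$ is the set of strategies, $S_{-i}$ is the product of the strategy sets of all other players together with nature (if nature moves). $z(s)$ is the terminal history reached by profile $s$. A profile $s_{-i}$ reaches $I_i$ if there is $s_i$ such that $(s_i,s_{-i})$ reaches $I_i$; $s_i$ reaches $I_i$ if there is $s_{-i}$ with $(s_i,s_{-i})$ reaching $I_i$. Let $S_{-i}(I_i)$ be the set of $s_{-i}$ reaching $I_i$. A belief system of $i$ is $\bar\beta_i=(\bar\beta_i(I_i))_{I_i\in\mathcal I_i}$ with $\bar\beta_i(I_i)\in\Delta(S_{-i})$, $\bar\beta_i(I_i)(S_{-i}(I_i))=1$, and such that if $I_i$ precedes $I_i'$ then $\bar\beta_i(I_i')$ is obtained from $\bar\beta_i(I_i)$ by conditioning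 on $S_{-i}(I_i')$ whenever this event has positive probability. It is full-support if each $\bar\beta_i(I_i)$ assigns positive probability to every element of $S_{-i}(I_i)$. A strategy $s_i'$ is an $I_i$-replacement of $s_i$ if it agrees with $s_i$ on all information sets strictly preceding $I_i$. Strategy $s_i$ is rational at $I_i$ with belief system $\bar\beta_i$ if either $s_i$ does not reach $I_i$, or no $I_i$-replacement of $s_i$ yields strictly higher expected utility $\sum_{s_{-i}}\bar\beta_i(I_i)(s_{-i})u_i(z(\cdot,s_{-i}))$ than $s_i$. Strong level-1: $\bar L_i^1(\bar\beta^1)=\{s_i\in S_i: s_i\text{ is rational at every } I_i\in\mathcal I_i \text{ with } \bar\beta^1_i\}$. Associated normal form: action sets $S_i$, utilities $s\mapsto u_i(z(s))$ (expected over nature if relevant via beliefs on $S_{-i}$). A belief $\beta^1_i\in\Delta(S_{-i})$ is full-support if it gives positive probability to every element of $S_{-i}$; it is consistent with $\bar\beta^1_i$ if $\bar\beta^1_i(I_i)=\beta^1_i(\cdot\mid S_{-i}(I_i))$ for every $I_i\in\mathcal I_i$. Normal-form level-1: $L_i^1(\beta^1)=\{s_i\in S_i: s_i \text{ maximizes } \sum_{s_{-i}}\beta^1_i(s_{-i})u_i(z(s_i,s_{-i}))\}$. *)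

theory Defs
  imports "HOL-Probability.Probability_Mass_Function" "HOL-Library.Sublist"
begin

text \<open>A move is a partial action profile: the active agents at a history each pick an
  action (Some a), inactive agents contribute None.  Histories are lists of moves.\<close>

type_synonym ('p, 'a) hist = "('p \<Rightarrow> 'a option) list"

record ('p, 'a) efg =
  agents  :: "'p set"                                  \<comment> \<open>players together with nature (if any)\<close>
  players :: "'p set"
  hist    :: "('p, 'a) hist set"
  acts    :: "('p, 'a) hist \<Rightarrow> 'p \<Rightarrow> 'a set"
  info    :: "'p \<Rightarrow> ('p, 'a) hist \<Rightarrow> ('p, 'a) hist set"
  util    :: "'p \<Rightarrow> ('p, 'a) hist \<Rightarrow> real"

definition active :: "('p, 'a) efg \<Rightarrow> ('p, 'a) hist \<Rightarrow> 'p \<Rightarrow> bool" where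
  "active G h j \<longleftrightarrow> h \<in> hist G \<and> j \<in> agents G \<and> acts G h j \<noteq> {}"

definition terminal :: "('p, 'a) efg \<Rightarrow> ('p, 'a) hist \<Rightarrow> bool" where
  "terminal G h \<longleftrightarrow> h \<in> hist G \<and> (\<forall>j. \<not> active G h j)"

definition infosets :: "('p, 'a) efg \<Rightarrow> 'p \<Rightarrow> ('p, 'a) hist set set" where
  "infosets G j = {info G j h | h. active G h j}"

definition exper :: "('p, 'a) efg \<Rightarrow> 'p \<Rightarrow> ('p, 'a) hist \<Rightarrow> (('p, 'a) hist set \<times> 'a) list" where
  "exper G j h = concat (map (\<lambda>k. if active G (take k h) j
        then [(info G j (take k h), the ((h ! k) j))] else []) [0..<length h])"

definition perfect_recall :: "('p, 'a) efg \<Rightarrow> bool" where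
  "perfect_recall G \<longleftrightarrow> (\<forall>j\<in>players G. \<forall>h h'. active G h j \<and> h' \<in> info G j h
        \<longrightarrow> exper G j h = exper G j h')"

definition wf_game :: "('p, 'a) efg \<Rightarrow> bool" where
  "wf_game G \<longleftrightarrow>
     finite (agents G) \<and> players G \<subseteq> agents G \<and> card (agents G - players G) \<le> 1 \<and>
     finite (hist G) \<and> [] \<in> hist G \<and>
     (\<forall>h\<in>hist G. \<forall>k. take k h \<in> hist G) \<and>
     (\<forall>h j. j \<notin> agents G \<longrightarrow> acts G h j = {}) \<and>
     (\<forall>h\<in>hist G. \<forall>m. h @ [m] \<in> hist G \<longleftrightarrow>
        (\<exists>j. active G h j) \<and>
        (\<forall>j. if active G h j then m j \<in> Some ` acts G h j else m j = None)) \<and>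
     (\<forall>h j. active G h j \<longrightarrow>
        h \<in> info G j h \<and>
        (\<forall>h'\<in>info G j h. active G h' j \<and> info G j h' = info G j h \<and> acts G h' j = acts G h j)) \<and>
     (\<forall>j\<in>agents G - players G. \<forall>h. active G h j \<longrightarrow> info G j h = {h})"

type_synonym ('p, 'a) strategy = "('p, 'a) hist set \<Rightarrow> 'a"
type_synonym ('p, 'a) profile = "'p \<Rightarrow> ('p, 'a) strategy"

definition strat :: "('p, 'a) efg \<Rightarrow> 'p \<Rightarrow> ('p, 'a) strategy set" where
  "strat G j = {s. (\<forall>I\<in>infosets G j. \<forall>h\<in>I. s I \<in> acts G h j) \<and>
                   (\<forall>I. I \<notin> infosets G j \<longrightarrow> s I = undefined)}"

text \<open>$S_{-i}$: profiles of all other agents (including nature); component i is undefined.\<close>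
definition oppstrat :: "('p, 'a) efg \<Rightarrow> 'p \<Rightarrow> ('p, 'a) profile set" where
  "oppstrat G i = (\<Pi>\<^sub>E j\<in>agents G - {i}. strat G j)"

definition consistent :: "('p, 'a) efg \<Rightarrow> ('p, 'a) profile \<Rightarrow> ('p, 'a) hist \<Rightarrow> bool" where
  "consistent G \<sigma> h \<longleftrightarrow> h \<in> hist G \<and>
     (\<forall>k<length h. \<forall>j. (h ! k) j =
        (if active G (take k h) j then Some (\<sigma> j (info G j (take k h))) else None))"

definition outcome :: "('p, 'a) efg \<Rightarrow> ('p, 'a) profile \<Rightarrow> ('p, 'a) hist" where
  "outcome G \<sigma> = (THE h. terminal G h \<and> consistent G \<sigma> h)"

definition reaches :: "('p, 'a) efg \<Rightarrow> ('p, 'a) profile \<Rightarrow> ('p, 'a) hist set \<Rightarrow> bool" where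
  "reaches G \<sigma> I \<longleftrightarrow> (\<exists>h\<in>I. prefix h (outcome G \<sigma>))"

definition oppreach :: "('p, 'a) efg \<Rightarrow> 'p \<Rightarrow> ('p, 'a) hist set \<Rightarrow> ('p, 'a) profile set" where
  "oppreach G i I = {\<tau> \<in> oppstrat G i. \<exists>s\<in>strat G i. reaches G (\<tau>(i := s)) I}"

definition strat_reaches :: "('p, 'a) efg \<Rightarrow> 'p \<Rightarrow> ('p, 'a) strategy \<Rightarrow> ('p, 'a) hist set \<Rightarrow> bool" where
  "strat_reaches G i s I \<longleftrightarrow> (\<exists>\<tau>\<in>oppstrat G i. reaches G (\<tau>(i := s)) I)"

definition precedes :: "('p, 'a) efg \<Rightarrow> ('p, 'a) hist set \<Rightarrow> ('p, 'a) hist set \<Rightarrow> bool" where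
  "precedes G I I' \<longleftrightarrow> (\<exists>h\<in>I. \<exists>h'\<in>I'. strict_prefix h h')"

definition replacement :: "('p, 'a) efg \<Rightarrow> 'p \<Rightarrow> ('p, 'a) hist set
     \<Rightarrow> ('p, 'a) strategy \<Rightarrow> ('p, 'a) strategy \<Rightarrow> bool" where
  "replacement G i I s s' \<longleftrightarrow> s' \<in> strat G i \<and>
     (\<forall>I'\<in>infosets G i. precedes G I' I \<longrightarrow> s' I' = s I')"

definition EU :: "('p, 'a) efg \<Rightarrow> 'p \<Rightarrow> ('p, 'a) profile pmf \<Rightarrow> ('p, 'a) strategy \<Rightarrow> real" where
  "EU G i b s = (\<Sum>\<tau>\<in>oppstrat G i. pmf b \<tau> * util G i (outcome G (\<tau>(i := s))))"

definition belief_system :: "('p, 'a) efg \<Rightarrow> 'p \<Rightarrow> (('p, 'a) hist set \<Rightarrow> ('p, 'a) profile pmf) \<Rightarrow> bool" where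
  "belief_system G i bs \<longleftrightarrow>
     (\<forall>I\<in>infosets G i. set_pmf (bs I) \<subseteq> oppreach G i I) \<and>
     (\<forall>I\<in>infosets G i. \<forall>I'\<in>infosets G i. precedes G I I' \<and>
        set_pmf (bs I) \<inter> oppreach G i I' \<noteq> {} \<longrightarrow> bs I' = cond_pmf (bs I) (oppreach G i I'))"

definition full_support_bs :: "('p, 'a) efg \<Rightarrow> 'p \<Rightarrow> (('p, 'a) hist set \<Rightarrow> ('p, 'a) profile pmf) \<Rightarrow> bool" where
  "full_support_bs G i bs \<longleftrightarrow> belief_system G i bs \<and>
     (\<forall>I\<in>infosets G i. oppreach G i I \<subseteq> set_pmf (bs I))"

definition rational_at :: "('p, 'a) efg \<Rightarrow> 'p \<Rightarrow> (('p, 'a) hist set \<Rightarrow> ('p, 'a) profile pmf)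
     \<Rightarrow> ('p, 'a) strategy \<Rightarrow> ('p, 'a) hist set \<Rightarrow> bool" where
  "rational_at G i bs s I \<longleftrightarrow> \<not> strat_reaches G i s I \<or>
     (\<forall>s'. replacement G i I s s' \<longrightarrow> EU G i (bs I) s' \<le> EU G i (bs I) s)"

definition strong_L1 :: "('p, 'a) efg \<Rightarrow> 'p \<Rightarrow> (('p, 'a) hist set \<Rightarrow> ('p, 'a) profile pmf)
     \<Rightarrow> ('p, 'a) strategy set" where
  "strong_L1 G i bs = {s \<in> strat G i. \<forall>I\<in>infosets G i. rational_at G i bs s I}"

definition full_support_nf :: "('p, 'a) efg \<Rightarrow> 'p \<Rightarrow> ('p, 'a) profile pmf \<Rightarrow> bool" where
  "full_support_nf G i b \<longleftrightarrow> set_pmf b = oppstrat G i"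

definition consistent_with :: "('p, 'a) efg \<Rightarrow> 'p \<Rightarrow> ('p, 'a) profile pmf
     \<Rightarrow> (('p, 'a) hist set \<Rightarrow> ('p, 'a) profile pmf) \<Rightarrow> bool" where
  "consistent_with G i b bs \<longleftrightarrow> (\<forall>I\<in>infosets G i. bs I = cond_pmf b (oppreach G i I))"

definition nf_L1 :: "('p, 'a) efg \<Rightarrow> 'p \<Rightarrow> ('p, 'a) profile pmf \<Rightarrow> ('p, 'a) strategy set" where
  "nf_L1 G i b = {s \<in> strat G i. \<forall>s'\<in>strat G i. EU G i b s' \<le> EU G i b s}"

end

theory Submission
  imports Defs
begin

definition prof_ok where "prof_ok G \<sigma> \<longleftrightarrow> (\<forall>j\<in>agents G. \<sigma> j \<in> strat G j)"

lemma wf_parts: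
  assumes "wf_game G"
  shows "finite (agents G) \<and> finite (hist G) \<and> [] \<in> hist G \<and>
   (\<forall>h\<in>hist G. \<forall>k. take k h \<in> hist G) \<and>
   (\<forall>h\<in>hist G. \<forall>m. h @ [m] \<in> hist G \<longleftrightarrow>
        (\<exists>j. active G h j) \<and>
        (\<forall>j. if active G h j then m j \<in> Some ` acts G h j else m j = None)) \<and>
   (\<forall>h j. active G h j \<longrightarrow>
        h \<in> info G j h \<and>
        (\<forall>h'\<in>info G j h. active G h' j \<and> info G j h' = info G j h \<and> acts G h' j = acts G h j))"
  using assms unfolding wf_game_def by (elim conjE) (intro conjI; assumption)

lemma wfD:
  assumes "wf_game G"
  shows "finite (agents G)" "finite (hist G)" "[] \<in> hist G"
    "\<And>h k. h \<in> hist G \<Longrightarrow> take k h \<in> hist G"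
    "\<And>h m. h \<in> hist G \<Longrightarrow> h @ [m] \<in> hist G \<longleftrightarrow> (\<exists>j. active G h j) \<and> (\<forall>j. if active G h j then m j \<in> Some ` acts G h j else m j = None)"
    "\<And>h j. active G h j \<Longrightarrow> h \<in> info G j h"
    "\<And>h j h'. active G h j \<Longrightarrow> h' \<in> info G j h \<Longrightarrow> active G h' j \<and> info G j h' = info G j h \<and> acts G h' j = acts G h j"
  using wf_parts[OF assms] by (meson+)

lemma consistent_take:
  assumes "wf_game G" "consistent G \<sigma> h"
  shows "consistent G \<sigma> (take n h)"
  using assms unfolding consistent_def
  by (auto simp: wfD(4)[OF assms(1)] min_def take_take)

lemma consistent_eq_take:
  assumes "consistent G \<sigma> h" "consistent G \<sigma> h'" "k \<le> length h" "k \<le> length h'"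
  shows "take k h = take k h'"
  using assms(3,4)
proof (induction k)
  case 0 then show ?case by simp
next
  case (Suc k)
  then have IH: "take k h = take k h'" by simp
  have "h ! k = h' ! k"
    using assms(1,2) Suc.prems IH unfolding consistent_def by (auto intro!: ext)
  then show ?case using Suc.prems IH by (simp add: take_Suc_conv_app_nth)
qed

lemma consistent_chain:
  assumes "consistent G \<sigma> h" "consistent G \<sigma> h'"
  shows "prefix h h' \<or> prefix h' h"
proof (cases "length h \<le> length h'")
  case True
  then have "take (length h) h' = h" using consistent_eq_take[OF assms, of "length h"] by simp
  then show ?thesis by (metis take_is_prefix)
next
  case False
  then have "take (length h') h = h'" using consistent_eq_take[OF assms, of "length h'"] by simp
  then show ?thesis by (metis take_is_prefix)
qed

lemma terminal_no_ext:
  assumes wf: "wf_game G" and t: "terminal G h" and h': "h' \<in> hist G" and sp: "strict_prefix h h'"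
  shows False
proof -
  from sp obtain zs where zs: "h' = h @ zs" "zs \<noteq> []"
    by (auto simp: strict_prefix_def prefix_def)
  have "take (Suc (length h)) h' = h @ [hd zs]" using zs by (cases zs) auto
  then have "h @ [hd zs] \<in> hist G" using wfD(4)[OF wf h'] by metis
  moreover have "h \<in> hist G" using t by (simp add: terminal_def)
  ultimately have "\<exists>j. active G h j" using wfD(5)[OF wf] by blast
  then show False using t by (simp add: terminal_def)
qed

lemma outcome_exists:
  assumes wf: "wf_game G" and ok: "prof_ok G \<sigma>"
  shows "\<exists>h. terminal G h \<and> consistent G \<sigma> h"
proof -
  let ?C = "{h. consistent G \<sigma> h}"
  have fin: "finite ?C" using wfD(2)[OF wf] by (rule finite_subset[rotated]) (auto simp: consistent_def)
  have ne: "[] \<in> ?C" using wfD(3)[OF wf] by (simp add: consistent_def)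
  define n where "n = Max (length ` ?C)"
  have "n \<in> length ` ?C" unfolding n_def using fin ne by (intro Max_in) auto
  then obtain h where hC: "consistent G \<sigma> h" and hn: "length h = n" by auto
  have hmax: "\<And>h'. consistent G \<sigma> h' \<Longrightarrow> length h' \<le> n" unfolding n_def using fin by (intro Max_ge) auto
  have "terminal G h"
  proof (rule ccontr)
    assume nt: "\<not> terminal G h"
    have hh: "h \<in> hist G" using hC by (simp add: consistent_def)
    then have ex: "\<exists>j. active G h j" using nt by (simp add: terminal_def)
    define m where "m = (\<lambda>j. if active G h j then Some (\<sigma> j (info G j h)) else None)"
    have "\<forall>j. if active G h j then m j \<in> Some ` acts G h j else m j = None"
    proof
      fix j show "if active G h j then m j \<in> Some ` acts G h j else m j = None"
      proof (cases "active G h j")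
        case True
        then have "j \<in> agents G" by (simp add: active_def)
        then have "\<sigma> j \<in> strat G j" using ok by (simp add: prof_ok_def)
        moreover have "info G j h \<in> infosets G j" using True by (auto simp: infosets_def)
        moreover have "h \<in> info G j h" using wfD(6)[OF wf True] .
        ultimately have "\<sigma> j (info G j h) \<in> acts G h j" by (auto simp: strat_def)
        then show ?thesis using True by (simp add: m_def)
      qed (simp add: m_def)
    qed
    then have "h @ [m] \<in> hist G" using wfD(5)[OF wf hh] ex by blast
    then have "consistent G \<sigma> (h @ [m])" using hC
      unfolding consistent_def
      by (auto simp: nth_append m_def less_Suc_eq)
    then have "length (h @ [m]) \<le> n" by (rule hmax)
    then show False using hn by simp
  qed
  then show ?thesis using hC by blast
qed

lemma outcome_unique:
  assumes wf: "wf_game G" and "terminal G z" "consistent G \<sigma> z" "terminal G z'" "consistent G \<sigma> z'"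
  shows "z = z'"
proof (rule ccontr)
  assume ne: "z \<noteq> z'"
  from consistent_chain[OF assms(3,5)] consider "prefix z z'" | "prefix z' z" by blast
  then show False
  proof cases
    case 1 then show False using terminal_no_ext[OF wf assms(2), of z'] assms(5) ne
      by (auto simp: consistent_def strict_prefix_def)
  next
    case 2 then show False using terminal_no_ext[OF wf assms(4), of z] assms(3) ne
      by (auto simp: consistent_def strict_prefix_def)
  qed
qed

lemma outcome_eq:
  assumes wf: "wf_game G" and "terminal G z" "consistent G \<sigma> z"
  shows "outcome G \<sigma> = z"
  unfolding outcome_def using assms outcome_unique[OF wf] by (intro the_equality) auto

lemma outcome_props:
  assumes wf: "wf_game G" and ok: "prof_ok G \<sigma>"
  shows "terminal G (outcome G \<sigma>)" "consistent G \<sigma> (outcome G \<sigma>)"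
  using outcome_exists[OF wf ok] outcome_eq[OF wf] by metis+

lemma consistent_prefix_outcome:
  assumes wf: "wf_game G" and ok: "prof_ok G \<sigma>" and c: "consistent G \<sigma> h"
  shows "prefix h (outcome G \<sigma>)"
proof -
  note z = outcome_props[OF wf ok]
  from consistent_chain[OF c z(2)] show ?thesis
    using terminal_no_ext[OF wf z(1), of h] c by (auto simp: consistent_def strict_prefix_def)
qed

lemma reaches_iff:
  assumes wf: "wf_game G" and ok: "prof_ok G \<sigma>"
  shows "reaches G \<sigma> I \<longleftrightarrow> (\<exists>h\<in>I. consistent G \<sigma> h)"
proof
  assume "reaches G \<sigma> I"
  then obtain h where "h \<in> I" "prefix h (outcome G \<sigma>)" by (auto simp: reaches_def)
  moreover have "consistent G \<sigma> (take (length h) (outcome G \<sigma>))"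
    by (rule consistent_take[OF wf outcome_props(2)[OF wf ok]])
  ultimately show "\<exists>h\<in>I. consistent G \<sigma> h" by (metis prefix_def append_eq_conv_conj)
next
  assume "\<exists>h\<in>I. consistent G \<sigma> h"
  then show "reaches G \<sigma> I" using consistent_prefix_outcome[OF wf ok] by (auto simp: reaches_def)
qed

lemma consistent_swap:
  assumes "consistent G (\<tau>(i:=s)) h"
    "\<And>k. k < length h \<Longrightarrow> active G (take k h) i \<Longrightarrow> s' (info G i (take k h)) = s (info G i (take k h))"
  shows "consistent G (\<tau>(i:=s')) h"
  using assms unfolding consistent_def by auto

lemma exper_set:
  "x \<in> set (exper G j h) \<longleftrightarrow> (\<exists>k<length h. active G (take k h) j \<and> x = (info G j (take k h), the ((h ! k) j)))"
  unfolding exper_def by (auto split: if_splits)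

lemma exper_nil:
  "exper G j h = [] \<longleftrightarrow> (\<forall>k<length h. \<not> active G (take k h) j)"
  using exper_set[of _ G j h] by (metis last_in_set list.set_cases neq_Nil_conv set_empty2 equals0D)

lemma prof_ok_upd:
  assumes "\<tau> \<in> oppstrat G i" "s \<in> strat G i"
  shows "prof_ok G (\<tau>(i:=s))"
  using assms by (auto simp: prof_ok_def oppstrat_def PiE_def Pi_def)


lemma acts_finite:
  assumes wf: "wf_game G" and a: "active G h j"
  shows "finite (acts G h j)"
proof -
  have hh: "h \<in> hist G" using a by (simp add: active_def)
  define m where "m = (\<lambda>x j'. if j' = j then Some x else if active G h j' then Some (SOME y. y \<in> acts G h j') else None)"
  have sub: "(\<lambda>x. h @ [m x]) ` acts G h j \<subseteq> hist G"
  proof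
    fix y assume "y \<in> (\<lambda>x. h @ [m x]) ` acts G h j"
    then obtain x where x: "x \<in> acts G h j" and y: "y = h @ [m x]" by blast
    have "\<forall>j'. if active G h j' then m x j' \<in> Some ` acts G h j' else m x j' = None"
    proof
      fix j' show "if active G h j' then m x j' \<in> Some ` acts G h j' else m x j' = None"
      proof (cases "active G h j'")
        case True
        then have "acts G h j' \<noteq> {}" by (simp add: active_def)
        then have "(SOME y. y \<in> acts G h j') \<in> acts G h j'" by (simp add: some_in_eq)
        then show ?thesis using True x by (auto simp: m_def)
      next
        case False
        then show ?thesis using a by (auto simp: m_def)
      qed
    qed
    then show "y \<in> hist G" using wfD(5)[OF wf hh] a y by blast
  qed
  have inj: "inj_on (\<lambda>x. h @ [m x]) (acts G h j)"
  proof (rule inj_onI)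
    fix x y assume "h @ [m x] = h @ [m y]"
    then have "m x j = m y j" by simp
    then show "x = y" by (simp add: m_def)
  qed
  show ?thesis
    using finite_subset[OF sub wfD(2)[OF wf]] inj finite_imageD by blast
qed

lemma infoset_props:
  assumes wf: "wf_game G" and I: "I \<in> infosets G j" and h: "h \<in> I"
  shows "active G h j" "info G j h = I"
proof -
  from I obtain h0 where h0: "active G h0 j" "I = info G j h0" by (auto simp: infosets_def)
  show "active G h j" "info G j h = I" using wfD(7)[OF wf h0(1)] h h0 by auto
qed

lemma infosets_finite:
  assumes wf: "wf_game G"
  shows "finite (infosets G j)"
proof -
  have "infosets G j \<subseteq> info G j ` hist G" by (auto simp: infosets_def active_def)
  then show ?thesis using wfD(2)[OF wf] finite_subset by blast
qed

lemma strat_finite: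
  assumes wf: "wf_game G"
  shows "finite (strat G j)"
proof -
  have sub: "strat G j \<subseteq> (\<Pi>\<^sub>E I\<in>infosets G j. \<Union>h\<in>I. acts G h j)"
  proof
    fix s assume s: "s \<in> strat G j"
    show "s \<in> (\<Pi>\<^sub>E I\<in>infosets G j. \<Union>h\<in>I. acts G h j)"
    proof (rule PiE_I)
      fix I assume I: "I \<in> infosets G j"
      then obtain h0 where h0: "active G h0 j" "I = info G j h0" by (auto simp: infosets_def)
      then have "h0 \<in> I" using wfD(6)[OF wf] by simp
      then show "s I \<in> (\<Union>h\<in>I. acts G h j)" using s I by (auto simp: strat_def)
    next
      fix I assume "I \<notin> infosets G j"
      then show "s I = undefined" using s by (auto simp: strat_def)
    qed
  qed
  have fin: "finite (\<Union>h\<in>I. acts G h j)" if I: "I \<in> infosets G j" for I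
  proof (rule finite_UN_I)
    show "finite I"
      using infoset_props(1)[OF wf I] wfD(2)[OF wf] by (metis active_def finite_subset subsetI)
    show "finite (acts G h j)" if "h \<in> I" for h
      using acts_finite[OF wf infoset_props(1)[OF wf I that]] .
  qed
  show ?thesis
    by (rule finite_subset[OF sub finite_PiE[OF infosets_finite[OF wf] fin]])
qed

lemma oppstrat_finite:
  assumes wf: "wf_game G"
  shows "finite (oppstrat G i)"
  unfolding oppstrat_def using wfD(1)[OF wf] strat_finite[OF wf]
  by (intro finite_PiE) auto

definition U where "U G i t \<tau> = util G i (outcome G (\<tau>(i := t)))"

lemma EU_cond:
  assumes fin: "finite (oppstrat G i)" and A: "A \<subseteq> oppstrat G i" and ne: "set_pmf b \<inter> A \<noteq> {}"
  shows "EU G i (cond_pmf b A) t = (\<Sum>\<tau>\<in>A. pmf b \<tau> * U G i t \<tau>) / measure_pmf.prob b A"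
proof -
  have "EU G i (cond_pmf b A) t = (\<Sum>\<tau>\<in>oppstrat G i. (if \<tau> \<in> A then pmf b \<tau> * U G i t \<tau> / measure_pmf.prob b A else 0))"
    unfolding EU_def U_def by (intro sum.cong) (auto simp: pmf_cond[OF ne])
  also have "\<dots> = (\<Sum>\<tau>\<in>A. pmf b \<tau> * U G i t \<tau> / measure_pmf.prob b A)"
    using fin A by (simp add: sum.If_cases Int_absorb1)
  also have "\<dots> = (\<Sum>\<tau>\<in>A. pmf b \<tau> * U G i t \<tau>) / measure_pmf.prob b A"
    by (simp add: sum_divide_distrib)
  finally show ?thesis .
qed

lemma EU_U: "EU G i b t = (\<Sum>\<tau>\<in>oppstrat G i. pmf b \<tau> * U G i t \<tau>)"
  unfolding EU_def U_def ..


lemma exper_strict_prefix: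
  assumes "strict_prefix h g" "active G h j"
  shows "(info G j h, the ((g ! length h) j)) \<in> set (exper G j g)"
proof -
  from assms(1) obtain zs where "g = h @ zs" "zs \<noteq> []" by (auto simp: strict_prefix_def prefix_def)
  then have "length h < length g" "take (length h) g = h" by auto
  then show ?thesis using assms(2) unfolding exper_set by (intro exI[of _ "length h"]) auto
qed

lemma reach_product:
  assumes wf: "wf_game G" and pr: "perfect_recall G" and i: "i \<in> players G"
   and I: "I \<in> infosets G i"
   and h0: "h0 \<in> I" "consistent G (\<tau>(i:=s0)) h0"
   and h1: "h1 \<in> I" "consistent G (\<tau>0(i:=s)) h1"
  shows "consistent G (\<tau>(i:=s)) h0"
proof (rule consistent_swap[OF h0(2)])
  fix k assume k: "k < length h0" and a: "active G (take k h0) i"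
  let ?J = "info G i (take k h0)"
  have "(?J, the ((h0!k) i)) \<in> set (exper G i h0)" using k a unfolding exper_set by blast
  moreover have "exper G i h0 = exper G i h1"
  proof -
    have "active G h0 i" "info G i h0 = I" using infoset_props[OF wf I h0(1)] by auto
    then show ?thesis using pr i h1(1) unfolding perfect_recall_def by blast
  qed
  ultimately have "(?J, the ((h0!k) i)) \<in> set (exper G i h1)" by simp
  then obtain k' where k': "k' < length h1" "active G (take k' h1) i"
     "?J = info G i (take k' h1)" "the ((h0!k) i) = the ((h1!k') i)"
    unfolding exper_set by blast
  have "(h0!k) i = Some (s0 ?J)" using h0(2) k a by (simp add: consistent_def)
  moreover have "(h1!k') i = Some (s (info G i (take k' h1)))" using h1(2) k' by (simp add: consistent_def)
  ultimately show "s ?J = s0 ?J" using k' by simp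
qed


lemma prefix_take_lt:
  assumes "prefix h z" "k \<le> length h"
  shows "take k z = take k h"
  using assms by (auto simp: prefix_def)

lemma prefix_take_ge:
  assumes "prefix h z" "length h \<le> k"
  shows "prefix h (take k z)"
  using assms by (auto simp: prefix_def)

lemma nf_imp_strong:
  assumes wf: "wf_game G" and pr: "perfect_recall G" and i: "i \<in> players G"
   and fs: "full_support_nf G i b" and cw: "consistent_with G i b bs"
   and s: "s \<in> nf_L1 G i b"
  shows "s \<in> strong_L1 G i bs"
  unfolding strong_L1_def
proof (intro CollectI conjI ballI)
  show sS: "s \<in> strat G i" using s by (simp add: nf_L1_def)
  fix I assume I: "I \<in> infosets G i"
  show "rational_at G i bs s I"
  proof (cases "strat_reaches G i s I")
    case False then show ?thesis by (simp add: rational_at_def)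
  next
    case True
    then obtain \<tau>0 where \<tau>0: "\<tau>0 \<in> oppstrat G i" "reaches G (\<tau>0(i:=s)) I"
      by (auto simp: strat_reaches_def)
    then obtain h1 where h1: "h1 \<in> I" "consistent G (\<tau>0(i:=s)) h1"
      using reaches_iff[OF wf prof_ok_upd[OF \<tau>0(1) sS]] by blast
    let ?A = "oppreach G i I"
    let ?O = "oppstrat G i"
    have AO: "?A \<subseteq> ?O" by (auto simp: oppreach_def)
    have \<tau>0A: "\<tau>0 \<in> ?A" using \<tau>0 sS by (auto simp: oppreach_def)
    have ne: "set_pmf b \<inter> ?A \<noteq> {}" using fs \<tau>0A AO by (auto simp: full_support_nf_def)
    have bsI: "bs I = cond_pmf b ?A" using cw I by (simp add: consistent_with_def)
    have fin: "finite ?O" by (rule oppstrat_finite[OF wf])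
    have pos: "measure_pmf.prob b ?A > 0" using ne measure_pmf_posI by (metis disjoint_iff)
    show ?thesis
      unfolding rational_at_def
    proof (intro disjI2 allI impI)
      fix s' assume rep: "replacement G i I s s'"
      have s'S: "s' \<in> strat G i" using rep by (simp add: replacement_def)
      have agree: "\<And>J. J \<in> infosets G i \<Longrightarrow> precedes G J I \<Longrightarrow> s' J = s J"
        using rep by (simp add: replacement_def)
      define after where "after J \<longleftrightarrow> J \<in> infosets G i \<and> (\<exists>h\<in>I. \<exists>g\<in>J. prefix h g)" for J
      define s'' where "s'' J = (if after J then s' J else s J)" for J
      have s''S: "s'' \<in> strat G i" using sS s'S by (auto simp: strat_def s''_def)
      have c1: "U G i s'' \<tau> = U G i s \<tau>" if \<tau>: "\<tau> \<in> ?O" "\<tau> \<notin> ?A" for \<tau>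
      proof -
        let ?z = "outcome G (\<tau>(i:=s))"
        note zp = outcome_props[OF wf prof_ok_upd[OF \<tau>(1) sS]]
        have "consistent G (\<tau>(i:=s'')) ?z"
        proof (rule consistent_swap[OF zp(2)])
          fix k assume k: "k < length ?z" and a: "active G (take k ?z) i"
          let ?J = "info G i (take k ?z)"
          show "s'' ?J = s ?J"
          proof (cases "after ?J")
            case False then show ?thesis by (simp add: s''_def)
          next
            case True
            then obtain h g where h: "h \<in> I" and g: "g \<in> ?J" and hg: "prefix h g"
              by (auto simp: after_def)
            have ex: "exper G i (take k ?z) = exper G i g"
              using pr i a g unfolding perfect_recall_def by blast
            have ha: "active G h i" "info G i h = I" using infoset_props[OF wf I h] by auto
            have gJ: "info G i g = ?J" using wfD(7)[OF wf a g] by simp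
            have "\<exists>k'. take k' ?z \<in> I"
            proof (cases "h = g")
              case True
              then have "I = ?J" using ha gJ by simp
              then show ?thesis using wfD(6)[OF wf a] by auto
            next
              case False
              then have "strict_prefix h g" using hg by (simp add: strict_prefix_def)
              then have "(I, the ((g ! length h) i)) \<in> set (exper G i g)"
                using exper_strict_prefix[OF _ ha(1)] ha(2) by metis
              then have "(I, the ((g ! length h) i)) \<in> set (exper G i (take k ?z))" using ex by simp
              then obtain k' where k': "k' < k" "active G (take k' (take k ?z)) i"
                  "I = info G i (take k' (take k ?z))"
                unfolding exper_set using k by auto
              then have "take k' ?z \<in> I" using wfD(6)[OF wf k'(2)] by (simp add: min_def)
              then show ?thesis by blast
            qed
            then obtain k' where "take k' ?z \<in> I" by blast
            moreover have "consistent G (\<tau>(i:=s)) (take k' ?z)" using consistent_take[OF wf zp(2)] .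
            ultimately have "\<tau> \<in> ?A" using \<tau>(1) sS reaches_iff[OF wf prof_ok_upd[OF \<tau>(1) sS]]
              by (auto simp: oppreach_def)
            then show ?thesis using \<tau>(2) by blast
          qed
        qed
        then have "outcome G (\<tau>(i:=s'')) = ?z" using outcome_eq[OF wf zp(1)] by blast
        then show ?thesis by (simp add: U_def)
      qed
      have c2: "U G i s'' \<tau> = U G i s' \<tau>" if \<tau>: "\<tau> \<in> ?A" for \<tau>
      proof -
        have \<tau>O: "\<tau> \<in> ?O" using \<tau> AO by blast
        from \<tau> obtain s0 where s0: "s0 \<in> strat G i" "reaches G (\<tau>(i:=s0)) I"
          by (auto simp: oppreach_def)
        then obtain h0 where h0: "h0 \<in> I" "consistent G (\<tau>(i:=s0)) h0"
          using reaches_iff[OF wf prof_ok_upd[OF \<tau>O s0(1)]] by blast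
        have hs: "consistent G (\<tau>(i:=s)) h0" by (rule reach_product[OF wf pr i I h0 h1])
        have prec: "precedes G (info G i (take k h0)) I \<and> info G i (take k h0) \<in> infosets G i"
          if "k < length h0" "active G (take k h0) i" for k
        proof
          have "take k h0 \<in> info G i (take k h0)" using wfD(6)[OF wf that(2)] .
          moreover have "strict_prefix (take k h0) h0"
          proof -
            have "take k h0 \<noteq> h0"
            proof
              assume "take k h0 = h0"
              then have "length (take k h0) = length h0" by simp
              with that(1) show False by simp
            qed
            then show ?thesis by (simp add: strict_prefix_def take_is_prefix)
          qed
          ultimately show "precedes G (info G i (take k h0)) I" using h0(1)
            unfolding precedes_def by blast
          show "info G i (take k h0) \<in> infosets G i" using that(2) by (auto simp: infosets_def)
        qed
        have hs': "consistent G (\<tau>(i:=s')) h0"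
          by (rule consistent_swap[OF hs]) (use prec agree in auto)
        let ?z = "outcome G (\<tau>(i:=s'))"
        note zp = outcome_props[OF wf prof_ok_upd[OF \<tau>O s'S]]
        have pz: "prefix h0 ?z" using consistent_prefix_outcome[OF wf prof_ok_upd[OF \<tau>O s'S] hs'] .
        have "consistent G (\<tau>(i:=s'')) ?z"
        proof (rule consistent_swap[OF zp(2)])
          fix k assume k: "k < length ?z" and a: "active G (take k ?z) i"
          let ?J = "info G i (take k ?z)"
          show "s'' ?J = s' ?J"
          proof (cases "k < length h0")
            case True
            then have tk: "take k ?z = take k h0" using prefix_take_lt[OF pz] by simp
            show ?thesis using prec[OF True] agree a tk by (auto simp: s''_def)
          next
            case False
            then have "prefix h0 (take k ?z)" using prefix_take_ge[OF pz] by simp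
            moreover have "take k ?z \<in> ?J" using wfD(6)[OF wf a] .
            moreover have "?J \<in> infosets G i" using a by (auto simp: infosets_def)
            ultimately have "after ?J" using h0(1) unfolding after_def by blast
            then show ?thesis by (simp add: s''_def)
          qed
        qed
        then have "outcome G (\<tau>(i:=s'')) = ?z" using outcome_eq[OF wf zp(1)] by blast
        then show ?thesis by (simp add: U_def)
      qed
      have "EU G i b s'' \<le> EU G i b s" using s s''S by (simp add: nf_L1_def)
      moreover have "EU G i b s'' = (\<Sum>\<tau>\<in>?O - ?A. pmf b \<tau> * U G i s \<tau>) + (\<Sum>\<tau>\<in>?A. pmf b \<tau> * U G i s' \<tau>)"
        unfolding EU_U sum.subset_diff[OF AO fin] using c1 c2 by simp
      moreover have "EU G i b s = (\<Sum>\<tau>\<in>?O - ?A. pmf b \<tau> * U G i s \<tau>) + (\<Sum>\<tau>\<in>?A. pmf b \<tau> * U G i s \<tau>)"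
        unfolding EU_U sum.subset_diff[OF AO fin] by simp
      ultimately have le: "(\<Sum>\<tau>\<in>?A. pmf b \<tau> * U G i s' \<tau>) \<le> (\<Sum>\<tau>\<in>?A. pmf b \<tau> * U G i s \<tau>)"
        by simp
      show "EU G i (bs I) s' \<le> EU G i (bs I) s"
        unfolding bsI EU_cond[OF fin AO ne] using le pos by (simp add: divide_right_mono)
    qed
  qed
qed


lemma strong_imp_nf:
  assumes wf: "wf_game G" and pr: "perfect_recall G" and i: "i \<in> players G"
   and fs: "full_support_nf G i b" and cw: "consistent_with G i b bs"
   and s: "s \<in> strong_L1 G i bs"
  shows "s \<in> nf_L1 G i b"
  unfolding nf_L1_def
proof (intro CollectI conjI ballI)
  show sS: "s \<in> strat G i" using s by (simp add: strong_L1_def)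
  fix t assume tS: "t \<in> strat G i"
  let ?O = "oppstrat G i"
  let ?A = "\<lambda>I. oppreach G i I"
  define M where "M = {I \<in> infosets G i. \<forall>h\<in>I. exper G i h = []}"
  define Z0 where "Z0 = {\<tau>\<in>?O. exper G i (outcome G (\<tau>(i:=s))) = []}"
  have fin: "finite ?O" by (rule oppstrat_finite[OF wf])
  have finM: "finite M" using infosets_finite[OF wf] by (auto simp: M_def)
  have AO: "?A I \<subseteq> ?O" for I by (auto simp: oppreach_def)
  have MI: "I \<in> infosets G i" if "I \<in> M" for I using that by (simp add: M_def)
  have reachM: "\<exists>h\<in>I. consistent G (\<tau>(i:=t')) h" if I: "I \<in> M" "\<tau> \<in> ?A I" for I \<tau> t'
  proof -
    from I(2) obtain s0 where s0: "s0 \<in> strat G i" "reaches G (\<tau>(i:=s0)) I" and \<tau>O: "\<tau> \<in> ?O"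
      by (auto simp: oppreach_def)
    then obtain h0 where h0: "h0 \<in> I" "consistent G (\<tau>(i:=s0)) h0"
      using reaches_iff[OF wf prof_ok_upd[OF \<tau>O s0(1)]] by blast
    have "exper G i h0 = []" using I(1) h0(1) by (auto simp: M_def)
    then have "consistent G (\<tau>(i:=t')) h0"
      by (intro consistent_swap[OF h0(2)]) (simp add: exper_nil)
    then show ?thesis using h0(1) by blast
  qed
  have disjZ: "Z0 \<inter> ?A I = {}" if I: "I \<in> M" for I
  proof (rule ccontr)
    assume "Z0 \<inter> ?A I \<noteq> {}"
    then obtain \<tau> where \<tau>: "\<tau> \<in> Z0" "\<tau> \<in> ?A I" by blast
    have \<tau>O: "\<tau> \<in> ?O" using \<tau>(1) by (simp add: Z0_def)
    obtain h where h: "h \<in> I" "consistent G (\<tau>(i:=s)) h" using reachM[OF I \<tau>(2)] by blast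
    let ?z = "outcome G (\<tau>(i:=s))"
    note zp = outcome_props[OF wf prof_ok_upd[OF \<tau>O sS]]
    have pz: "prefix h ?z" by (rule consistent_prefix_outcome[OF wf prof_ok_upd[OF \<tau>O sS] h(2)])
    have ha: "active G h i" using infoset_props[OF wf MI[OF I] h(1)] by simp
    have "h \<noteq> ?z" using zp(1) ha by (auto simp: terminal_def)
    then have "strict_prefix h ?z" using pz by (simp add: strict_prefix_def)
    then have "set (exper G i ?z) \<noteq> {}" using exper_strict_prefix[OF _ ha] by (metis empty_iff)
    then show False using \<tau>(1) by (simp add: Z0_def)
  qed
  have disjA: "?A I \<inter> ?A J = {}" if IJ: "I \<in> M" "J \<in> M" "I \<noteq> J" for I J
  proof (rule ccontr)
    assume "?A I \<inter> ?A J \<noteq> {}"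
    then obtain \<tau> where \<tau>: "\<tau> \<in> ?A I" "\<tau> \<in> ?A J" by blast
    obtain hI where hI: "hI \<in> I" "consistent G (\<tau>(i:=s)) hI" using reachM[OF IJ(1) \<tau>(1)] by blast
    obtain hJ where hJ: "hJ \<in> J" "consistent G (\<tau>(i:=s)) hJ" using reachM[OF IJ(2) \<tau>(2)] by blast
    have aI: "active G hI i" "info G i hI = I" using infoset_props[OF wf MI[OF IJ(1)] hI(1)] by auto
    have aJ: "active G hJ i" "info G i hJ = J" using infoset_props[OF wf MI[OF IJ(2)] hJ(1)] by auto
    have eI: "exper G i hI = []" using IJ(1) hI(1) by (simp add: M_def)
    have eJ: "exper G i hJ = []" using IJ(2) hJ(1) by (simp add: M_def)
    have "hI = hJ"
    proof (rule ccontr)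
      assume ne: "hI \<noteq> hJ"
      from consistent_chain[OF hI(2) hJ(2)] show False
      proof
        assume "prefix hI hJ"
        then have "strict_prefix hI hJ" using ne by (simp add: strict_prefix_def)
        then show False using exper_strict_prefix[OF _ aI(1)] eJ by fastforce
      next
        assume "prefix hJ hI"
        then have "strict_prefix hJ hI" using ne by (simp add: strict_prefix_def)
        then show False using exper_strict_prefix[OF _ aJ(1)] eI by fastforce
      qed
    qed
    then show False using aI aJ IJ(3) by simp
  qed
  have cover: "?O = Z0 \<union> (\<Union>I\<in>M. ?A I)"
  proof
    show "Z0 \<union> (\<Union>I\<in>M. ?A I) \<subseteq> ?O" using AO by (auto simp: Z0_def)
  next
    show "?O \<subseteq> Z0 \<union> (\<Union>I\<in>M. ?A I)"
    proof
      fix \<tau> assume \<tau>O: "\<tau> \<in> ?O"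
      show "\<tau> \<in> Z0 \<union> (\<Union>I\<in>M. ?A I)"
      proof (cases "\<tau> \<in> Z0")
        case True then show ?thesis by blast
      next
        case False
        let ?z = "outcome G (\<tau>(i:=s))"
        note zp = outcome_props[OF wf prof_ok_upd[OF \<tau>O sS]]
        have "exper G i ?z \<noteq> []" using False \<tau>O by (simp add: Z0_def)
        then obtain k where k: "k < length ?z" "active G (take k ?z) i" by (auto simp: exper_nil)
        define k0 where "k0 = (LEAST k. k < length ?z \<and> active G (take k ?z) i)"
        have k0: "k0 < length ?z" "active G (take k0 ?z) i"
          using LeastI[of "\<lambda>k. k < length ?z \<and> active G (take k ?z) i", OF conjI[OF k]]
          unfolding k0_def by auto
        have k0min: "\<not> active G (take k' ?z) i" if "k' < k0" for k'
          using not_less_Least[of k' "\<lambda>k. k < length ?z \<and> active G (take k ?z) i"] that k0(1)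
          unfolding k0_def by auto
        let ?I = "info G i (take k0 ?z)"
        have Iinf: "?I \<in> infosets G i" using k0(2) by (auto simp: infosets_def)
        have e0: "exper G i (take k0 ?z) = []"
          unfolding exper_nil using k0min by (simp add: min_def)
        have "\<forall>h\<in>?I. exper G i h = []"
        proof
          fix h assume "h \<in> ?I"
          then have "exper G i (take k0 ?z) = exper G i h"
            using pr i k0(2) unfolding perfect_recall_def by blast
          then show "exper G i h = []" using e0 by simp
        qed
        then have IM: "?I \<in> M" using Iinf by (simp add: M_def)
        have "take k0 ?z \<in> ?I" using wfD(6)[OF wf k0(2)] .
        moreover have "consistent G (\<tau>(i:=s)) (take k0 ?z)" using consistent_take[OF wf zp(2)] .
        ultimately have "\<tau> \<in> ?A ?I" using \<tau>O sS reaches_iff[OF wf prof_ok_upd[OF \<tau>O sS]]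
          by (auto simp: oppreach_def)
        then show ?thesis using IM by blast
      qed
    qed
  qed
  have decomp: "(\<Sum>\<tau>\<in>?O. f \<tau>) = (\<Sum>\<tau>\<in>Z0. f \<tau>) + (\<Sum>I\<in>M. \<Sum>\<tau>\<in>?A I. f \<tau>)" for f :: "_ \<Rightarrow> real"
  proof -
    have finZ: "finite Z0" using fin by (auto simp: Z0_def)
    have finA: "\<forall>I\<in>M. finite (?A I)" using fin AO finite_subset by blast
    have "(\<Sum>\<tau>\<in>?O. f \<tau>) = (\<Sum>\<tau>\<in>Z0. f \<tau>) + (\<Sum>\<tau>\<in>(\<Union>I\<in>M. ?A I). f \<tau>)"
      unfolding cover
      by (rule sum.union_disjoint[OF finZ]) (use finM finA disjZ in auto)
    also have "(\<Sum>\<tau>\<in>(\<Union>I\<in>M. ?A I). f \<tau>) = (\<Sum>I\<in>M. \<Sum>\<tau>\<in>?A I. f \<tau>)"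
      by (rule sum.UNION_disjoint[OF finM finA]) (use disjA in blast)
    finally show ?thesis .
  qed
  have cZ: "U G i t \<tau> = U G i s \<tau>" if \<tau>: "\<tau> \<in> Z0" for \<tau>
  proof -
    have \<tau>O: "\<tau> \<in> ?O" and e: "exper G i (outcome G (\<tau>(i:=s))) = []" using \<tau> by (auto simp: Z0_def)
    note zp = outcome_props[OF wf prof_ok_upd[OF \<tau>O sS]]
    have "consistent G (\<tau>(i:=t)) (outcome G (\<tau>(i:=s)))"
      by (intro consistent_swap[OF zp(2)]) (use e in \<open>simp add: exper_nil\<close>)
    then have "outcome G (\<tau>(i:=t)) = outcome G (\<tau>(i:=s))" using outcome_eq[OF wf zp(1)] by blast
    then show ?thesis by (simp add: U_def)
  qed
  have cM: "(\<Sum>\<tau>\<in>?A I. pmf b \<tau> * U G i t \<tau>) \<le> (\<Sum>\<tau>\<in>?A I. pmf b \<tau> * U G i s \<tau>)"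
    if I: "I \<in> M" for I
  proof (cases "?A I = {}")
    case True then show ?thesis by simp
  next
    case False
    then obtain \<tau>1 where \<tau>1: "\<tau>1 \<in> ?A I" by blast
    have \<tau>1O: "\<tau>1 \<in> ?O" using \<tau>1 AO by blast
    have II: "I \<in> infosets G i" using MI[OF I] .
    have rat: "rational_at G i bs s I" using s II by (simp add: strong_L1_def)
    have sr: "strat_reaches G i s I"
      using reachM[OF I \<tau>1, of s] reaches_iff[OF wf prof_ok_upd[OF \<tau>1O sS]] \<tau>1O
      unfolding strat_reaches_def by blast
    have rep: "replacement G i I s t"
      unfolding replacement_def
    proof (intro conjI tS ballI impI)
      fix J assume J: "J \<in> infosets G i" and p: "precedes G J I"
      then obtain h' h where h': "h' \<in> J" and h: "h \<in> I" and sp: "strict_prefix h' h"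
        by (auto simp: precedes_def)
      have ah: "active G h' i" using infoset_props[OF wf J h'] by simp
      have "set (exper G i h) \<noteq> {}" using exper_strict_prefix[OF sp ah] by (metis empty_iff)
      moreover have "exper G i h = []" using I h by (simp add: M_def)
      ultimately show "t J = s J" by simp
    qed
    have le: "EU G i (bs I) t \<le> EU G i (bs I) s" using rat sr rep by (simp add: rational_at_def)
    have ne: "set_pmf b \<inter> ?A I \<noteq> {}" using fs \<tau>1 \<tau>1O by (auto simp: full_support_nf_def)
    have pos: "measure_pmf.prob b (?A I) > 0" using ne measure_pmf_posI by (metis disjoint_iff)
    have bsI: "bs I = cond_pmf b (?A I)" using cw II by (simp add: consistent_with_def)
    show ?thesis using le pos unfolding bsI EU_cond[OF fin AO ne] by (simp add: divide_le_cancel)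
  qed
  have "EU G i b t = (\<Sum>\<tau>\<in>Z0. pmf b \<tau> * U G i t \<tau>) + (\<Sum>I\<in>M. \<Sum>\<tau>\<in>?A I. pmf b \<tau> * U G i t \<tau>)"
    unfolding EU_U by (rule decomp)
  also have "\<dots> \<le> (\<Sum>\<tau>\<in>Z0. pmf b \<tau> * U G i s \<tau>) + (\<Sum>I\<in>M. \<Sum>\<tau>\<in>?A I. pmf b \<tau> * U G i s \<tau>)"
  proof -
    have "(\<Sum>\<tau>\<in>Z0. pmf b \<tau> * U G i t \<tau>) = (\<Sum>\<tau>\<in>Z0. pmf b \<tau> * U G i s \<tau>)"
      by (rule sum.cong) (simp_all add: cZ)
    moreover have "(\<Sum>I\<in>M. \<Sum>\<tau>\<in>?A I. pmf b \<tau> * U G i t \<tau>) \<le> (\<Sum>I\<in>M. \<Sum>\<tau>\<in>?A I. pmf b \<tau> * U G i s \<tau>)"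
      by (rule sum_mono) (rule cM)
    ultimately show ?thesis by linarith
  qed
  also have "\<dots> = EU G i b s"
    unfolding EU_U by (rule decomp[symmetric])
  finally show "EU G i b t \<le> EU G i b s" .
qed


theorem proposition3:
  fixes G :: "('p, 'a) efg"
    and bbar :: "'p \<Rightarrow> ('p, 'a) hist set \<Rightarrow> ('p, 'a) profile pmf"
    and b :: "'p \<Rightarrow> ('p, 'a) profile pmf"
  assumes "wf_game G"
    and "perfect_recall G"
    and "\<forall>i\<in>players G. full_support_bs G i (bbar i)"
    and "\<forall>i\<in>players G. full_support_nf G i (b i)"
    and "\<forall>i\<in>players G. consistent_with G i (b i) (bbar i)"
  shows "\<forall>i\<in>players G. strong_L1 G i (bbar i) = nf_L1 G i (b i)"
proof
  fix i assume i: "i \<in> players G"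
  have fs: "full_support_nf G i (b i)" and cw: "consistent_with G i (b i) (bbar i)"
    using assms(4,5) i by auto
  show "strong_L1 G i (bbar i) = nf_L1 G i (b i)"
    using nf_imp_strong[OF assms(1,2) i fs cw] strong_imp_nf[OF assms(1,2) i fs cw] by blast
qed

end
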